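(* Let $n\ge 2$, $q=z_n=(1,2,\dots,n)^T$ and $X=F_n(z_n)$. Then $X^TX$ is invertible and the log-prime estimator $\ln\hat q=(X^TX)^{-1}X^T\ln z_n$ satisfies, for $i=1,\dots,n$, $$(\ln\hat q)_i=\begin{cases}\ln i,& i\text{ prime},\\ 0,& i\text{ not prime}.\end{cases}$$
   Context: Logarithms of vectors are entry-wise. For $1\le i\le n$, $e_{\bar i|n}\in\mathbb{R}^n$ has $k$-th entry $1$ if $i\mid k$, else $0$. For $2\le i\le n$, $f_{i|n}=\sum_{t=1}^{\lfloor \log_i n\rfloor} e_{\overline{i^t}|n}$, and by convention $f_{1|n}=1_n$ (all-ones vector). $F_n(z_n)=[f_{1|n}\ f_{2|n}\ \cdots\ f_{n|n}]\in\mathbb{R}^{n\times n}$. *)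

theory Defs
  imports Complex_Main "Jordan_Normal_Form.Matrix" "HOL-Computational_Algebra.Primes"
begin

(* Vectors in R^n are JNF vectors of dimension n; the paper's (1-based) entry k
   is stored at (0-based) index k-1. *)

definition ebar :: "nat \<Rightarrow> nat \<Rightarrow> real vec" where
  "ebar i n = vec n (\<lambda>k. if i dvd (k + 1) then 1 else 0)"

definition fvec :: "nat \<Rightarrow> nat \<Rightarrow> real vec" where
  "fvec i n = (if i = 1 then vec n (\<lambda>k. 1)
     else vec n (\<lambda>k. \<Sum>t\<in>{1..nat \<lfloor>log (real i) (real n)\<rfloor>}. ebar (i ^ t) n $ k))"

definition Fmat :: "nat \<Rightarrow> real mat" where
  "Fmat n = mat n n (\<lambda>(k, j). fvec (j + 1) n $ k)"

definition zvec :: "nat \<Rightarrow> real vec" where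
  "zvec n = vec n (\<lambda>k. real (k + 1))"

definition ln_vec :: "real vec \<Rightarrow> real vec" where
  "ln_vec v = map_vec ln v"

end

theory Submission
  imports Defs "Jordan_Normal_Form.Determinant"
begin

lemma floor_log_le_iff:
  fixes i n t :: nat
  assumes "i \<ge> 2" "n \<ge> 1"
  shows "t \<le> nat \<lfloor>log (real i) (real n)\<rfloor> \<longleftrightarrow> i ^ t \<le> n"
proof -
  have "i ^ t \<le> n \<longleftrightarrow> real i ^ t \<le> real n" by (metis of_nat_le_iff of_nat_power)
  also have "\<dots> \<longleftrightarrow> real i powr real t \<le> real n"
    using assms by (simp add: powr_realpow)
  also have "\<dots> \<longleftrightarrow> real t \<le> log (real i) (real n)"
    using assms by (subst le_log_iff) auto
  also have "\<dots> \<longleftrightarrow> int t \<le> \<lfloor>log (real i) (real n)\<rfloor>"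
    by (metis le_floor_iff of_int_of_nat_eq)
  also have "\<dots> \<longleftrightarrow> t \<le> nat \<lfloor>log (real i) (real n)\<rfloor>"
  proof -
    have "log (real i) (real n) \<ge> 0" using assms by simp
    hence "\<lfloor>log (real i) (real n)\<rfloor> \<ge> 0" by simp
    thus ?thesis by (simp add: le_nat_iff)
  qed
  finally show ?thesis by simp
qed

lemma fvec_entry:
  assumes "i \<ge> 2" "k < n"
  shows "fvec i n $ k = real (multiplicity i (k + 1))"
proof -
  let ?L = "nat \<lfloor>log (real i) (real n)\<rfloor>"
  have nu: "\<not> is_unit i" using assms by simp
  have seteq: "{t\<in>{1..?L}. i ^ t dvd (k + 1)} = {1..multiplicity i (k+1)}"
  proof (rule Set.set_eqI, rule iffI)
    fix t assume "t \<in> {t\<in>{1..?L}. i ^ t dvd (k + 1)}"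
    then show "t \<in> {1..multiplicity i (k+1)}"
      using power_dvd_iff_le_multiplicity[of "k+1" i t] nu by auto
  next
    fix t assume t: "t \<in> {1..multiplicity i (k+1)}"
    hence d: "i ^ t dvd (k + 1)"
      using power_dvd_iff_le_multiplicity[of "k+1" i t] nu by auto
    hence "i ^ t \<le> n" using assms dvd_imp_le[OF d] by linarith
    hence "t \<le> ?L" using floor_log_le_iff[of i n t] assms by auto
    thus "t \<in> {t\<in>{1..?L}. i ^ t dvd (k + 1)}" using t d by auto
  qed
  have "fvec i n $ k = (\<Sum>t\<in>{1..?L}. if i ^ t dvd (k + 1) then 1 else 0)"
    using assms by (simp add: fvec_def ebar_def)
  also have "\<dots> = real (card {t\<in>{1..?L}. i ^ t dvd (k + 1)})"
    by (simp add: sum.If_cases Int_def atLeastAtMost_iff conj_assoc)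
  finally show ?thesis using seteq by simp
qed

lemma Fmat_entry:
  assumes "k < n" "j < n"
  shows "Fmat n $$ (k, j) = (if j = 0 then 1 else real (multiplicity (j + 1) (k + 1)))"
  using assms fvec_entry[of "j+1" k n] by (auto simp: Fmat_def fvec_def)

lemma Fmat_carrier: "Fmat n \<in> carrier_mat n n" by (simp add: Fmat_def)

lemma det_Fmat: "det (Fmat n) = 1"
proof -
  have "det (Fmat n) = prod_list (diag_mat (Fmat n))"
  proof (rule det_lower_triangular[OF _ Fmat_carrier])
    fix i j assume ij: "i < j" "j < n"
    have "\<not> (j + 1) dvd (i + 1)" using ij by (auto dest: dvd_imp_le)
    thus "Fmat n $$ (i, j) = 0" using ij
      by (simp add: Fmat_entry not_dvd_imp_multiplicity_0)
  qed
  also have "\<dots> = 1"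
  proof -
    have "\<forall>x\<in>set (diag_mat (Fmat n)). x = 1"
    proof
      fix x assume "x \<in> set (diag_mat (Fmat n))"
      then obtain j where j: "j < n" "x = Fmat n $$ (j, j)"
        by (auto simp: diag_mat_def Fmat_carrier[THEN carrier_matD(1)])
      show "x = 1" using j by (simp add: Fmat_entry multiplicity_self)
    qed
    moreover have "\<And>xs::real list. \<forall>x\<in>set xs. x = 1 \<Longrightarrow> prod_list xs = 1"
      subgoal for xs by (induction xs) auto done
    ultimately show ?thesis by blast
  qed
  finally show ?thesis .
qed

definition wvec :: "nat \<Rightarrow> real vec" where
  "wvec n = vec n (\<lambda>j. if prime (j + 1) then ln (real (j + 1)) else 0)"

lemma ln_factor:
  fixes m n :: nat
  assumes "1 \<le> m" "m \<le> n"
  shows "ln (real m) = (\<Sum>p\<in>{1..n}. if prime p then real (multiplicity p m) * ln (real p) else 0)"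
proof -
  have m0: "m > 0" using assms by simp
  define P where "P = (\<Prod>p\<in>prime_factors m. p ^ multiplicity p m)"
  have mP: "m = P" unfolding P_def by (rule prime_factorization_nat[OF m0])
  have "real P = (\<Prod>p\<in>prime_factors m. real p ^ multiplicity p m)"
    unfolding P_def by (simp add: of_nat_prod)
  hence "ln (real m) = ln (\<Prod>p\<in>prime_factors m. real p ^ multiplicity p m)"
    using mP by simp
  also have "\<dots> = (\<Sum>p\<in>prime_factors m. ln (real p ^ multiplicity p m))"
    by (rule ln_prod) (auto intro: prime_gt_0_nat simp: in_prime_factors_iff)
  also have "\<dots> = (\<Sum>p\<in>prime_factors m. real (multiplicity p m) * ln (real p))"
    by (intro sum.cong refl) (auto simp: ln_realpow in_prime_factors_iff prime_gt_0_nat)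
  also have "\<dots> = (\<Sum>p\<in>prime_factors m. if prime p then real (multiplicity p m) * ln (real p) else 0)"
    by (intro sum.cong refl) (auto simp: in_prime_factors_iff)
  also have "\<dots> = (\<Sum>p\<in>{1..n}. if prime p then real (multiplicity p m) * ln (real p) else 0)"
  proof (rule sum.mono_neutral_left)
    show "prime_factors m \<subseteq> {1..n}"
    proof
      fix p assume p: "p \<in> prime_factors m"
      hence "p dvd m" "prime p" by (auto simp: in_prime_factors_iff)
      hence "p \<le> m" "p \<ge> 1" using m0 dvd_imp_le prime_ge_1_nat by auto
      thus "p \<in> {1..n}" using assms by auto
    qed
    show "\<forall>p\<in>{1..n} - prime_factors m. (if prime p then real (multiplicity p m) * ln (real p) else 0) = 0"
    proof
      fix p assume p: "p \<in> {1..n} - prime_factors m"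
      show "(if prime p then real (multiplicity p m) * ln (real p) else 0) = 0"
      proof (cases "prime p")
        case True
        hence "\<not> p dvd m" using p m0 by (auto simp: in_prime_factors_iff)
        thus ?thesis by (simp add: not_dvd_imp_multiplicity_0)
      qed simp
    qed
  qed auto
  finally show ?thesis .
qed

lemma shift_sum: "(\<Sum>p\<in>{1..n}. (g::nat \<Rightarrow> real) p) = (\<Sum>j\<in>{0..<n}. g (j+1))"
  by (induction n) (auto simp: atLeastAtMostSuc_conv)

lemma ln_z_eq: "ln_vec (zvec n) = Fmat n *\<^sub>v wvec n"
proof (rule eq_vecI)
  show "dim_vec (ln_vec (zvec n)) = dim_vec (Fmat n *\<^sub>v wvec n)"
    by (simp add: ln_vec_def zvec_def Fmat_def)
  fix k assume "k < dim_vec (Fmat n *\<^sub>v wvec n)"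
  hence k: "k < n" by (simp add: Fmat_def)
  have "(Fmat n *\<^sub>v wvec n) $ k = (\<Sum>j\<in>{0..<n}. Fmat n $$ (k, j) * wvec n $ j)"
    using k by (simp add: mult_mat_vec_def scalar_prod_def Fmat_def wvec_def)
  also have "\<dots> = (\<Sum>j\<in>{0..<n}. if prime (j + 1) then real (multiplicity (j+1) (k+1)) * ln (real (j+1)) else 0)"
    using k by (intro sum.cong refl) (auto simp: Fmat_entry wvec_def)
  also have "\<dots> = (\<Sum>p\<in>{1..n}. if prime p then real (multiplicity p (k+1)) * ln (real p) else 0)"
    using shift_sum[of "\<lambda>p. if prime p then real (multiplicity p (k+1)) * ln (real p) else 0" n]
    by (rule sym)
  also have "\<dots> = ln (real (k + 1))"
    using ln_factor[of "k+1" n] k by simp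
  finally show "ln_vec (zvec n) $ k = (Fmat n *\<^sub>v wvec n) $ k"
    using k by (simp add: ln_vec_def zvec_def)
qed


lemma XtX_carrier: "transpose_mat (Fmat n) * Fmat n \<in> carrier_mat n n"
  using Fmat_carrier[of n] by (metis mult_carrier_mat transpose_carrier_mat)

lemma det_XtX: "det (transpose_mat (Fmat n) * Fmat n) = 1"
proof -
  have T: "transpose_mat (Fmat n) \<in> carrier_mat n n" using Fmat_carrier[of n] by simp
  show ?thesis using det_mult[OF T Fmat_carrier]
    det_transpose[OF Fmat_carrier] det_Fmat by simp
qed

lemma invertible_XtX: "invertible_mat (transpose_mat (Fmat n) * Fmat n)"
proof -
  let ?A = "transpose_mat (Fmat n) * Fmat n"
  have "?A \<in> Units (ring_mat TYPE(real) n undefined)"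
    by (rule det_non_zero_imp_unit[OF XtX_carrier]) (simp add: det_XtX)
  then obtain B where B: "B \<in> carrier_mat n n" "B * ?A = 1\<^sub>m n" "?A * B = 1\<^sub>m n"
    by (auto simp: Units_def ring_mat_def)
  show ?thesis unfolding invertible_mat_def inverts_mat_def
    using B XtX_carrier[of n] by (intro conjI exI[of _ B]) (auto simp: square_mat.simps)
qed

theorem theorem3p4:
  fixes n :: nat
  assumes "n \<ge> 2"
  defines "X \<equiv> Fmat n"
  shows "invertible_mat (transpose_mat X * X) \<and>
    (\<forall>B. inverts_mat (transpose_mat X * X) B \<and> inverts_mat B (transpose_mat X * X) \<longrightarrow>
       (let lnq = (B * transpose_mat X) *\<^sub>v ln_vec (zvec n) in
        dim_vec lnq = n \<and>
        (\<forall>i\<in>{1..n}. lnq $ (i - 1) = (if prime i then ln (real i) else 0))))"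
proof (intro conjI allI impI)
  show "invertible_mat (transpose_mat X * X)" unfolding X_def by (rule invertible_XtX)
next
  fix B assume inv: "inverts_mat (transpose_mat X * X) B \<and> inverts_mat B (transpose_mat X * X)"
  have X: "X \<in> carrier_mat n n" unfolding X_def by (rule Fmat_carrier)
  have Xt: "transpose_mat X \<in> carrier_mat n n" using X by simp
  have A: "transpose_mat X * X \<in> carrier_mat n n" using X by simp
  have i1: "transpose_mat X * X * B = 1\<^sub>m n" using inv A by (auto simp: inverts_mat_def)
  have i2: "B * (transpose_mat X * X) = 1\<^sub>m (dim_row B)" using inv by (auto simp: inverts_mat_def)
  have cB: "dim_col B = n" using arg_cong[OF i1, of dim_col] by simp
  have rB: "dim_row B = n" using arg_cong[OF i2, of dim_col] A X by simp
  have Bc: "B \<in> carrier_mat n n" using cB rB by auto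
  have w: "wvec n \<in> carrier_vec n" by (simp add: wvec_def)
  have "(B * transpose_mat X) *\<^sub>v ln_vec (zvec n) = (B * transpose_mat X) *\<^sub>v (X *\<^sub>v wvec n)"
    unfolding X_def ln_z_eq ..
  also have "\<dots> = ((B * transpose_mat X) * X) *\<^sub>v wvec n"
    using Bc Xt X w by (subst assoc_mult_mat_vec[of _ n n _ n]) auto
  also have "(B * transpose_mat X) * X = B * (transpose_mat X * X)"
    using Bc Xt X by (rule assoc_mult_mat)
  also have "\<dots> = 1\<^sub>m n" using i2 rB by simp
  also have "1\<^sub>m n *\<^sub>v wvec n = wvec n" using w by simp
  finally have lnq: "(B * transpose_mat X) *\<^sub>v ln_vec (zvec n) = wvec n" .
  show "let lnq = (B * transpose_mat X) *\<^sub>v ln_vec (zvec n) in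
        dim_vec lnq = n \<and>
        (\<forall>i\<in>{1..n}. lnq $ (i - 1) = (if prime i then ln (real i) else 0))"
    unfolding Let_def lnq by (auto simp: wvec_def)
qed

end
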